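(* For any two information trees $\mathcal T,\mathcal T'$ on $\mathcal I$: (i) $\mathcal T\succeq_{dif}\mathcal T'$ if and only if $\mathcal T\succeq_{FO}\mathcal T'$; (ii) $\mathcal T\succeq_{FO}\mathcal T'$ if and only if $\mathcal T'\succeq_{SO}\mathcal T$.
   Context: Model. Fix an integer $I\ge2$, agents $\mathcal I=\{1,\dots,I\}$, a prior $\rho\in(0,1)$ and a loss probability $\varepsilon\in(0,1)$. A state of nature $\theta\in\{g,b\}$ has $\Pr(\theta=g)=\rho$. A forest $F$ on $\mathcal I$ is a collection of vertex-disjoint undirected trees $T^1,\dots,T^R$ whose vertex sets partition $\mathcal I$; a seeding $s=(s^1,\dots,s^R)$ chooses exactly one vertex $s^r$ of each $T^r$. The pair $\mathcal T=(F,s)$ is an information tree: orient each $T^r$ away from $s^r$ and add a root $0$ (the planner) with an arc $0\to s^r$ for each $r$. If $\theta=b$ no messages are sent. If $\theta=g$ the planner sends a message along each arc $0\to s^r$, and every agent who receives a message forwards it along every arc leaving her. Each transmission along an arc is lost independently with probability $\varepsilon$. Agent $i$ observes only $x_i\in\{y,n\}$. $\Omega=\{g,b\}\times\{y,n\}^I$, $\mathbb P_{\mathcal T}$ the induced probability. $G=\{\theta=g\}$, $Y_i=\{x_i=y\}$, $N_i=\Omega\setminus Y_i$, $Y^*=\bigcap_iY_i$. Orders: let $d(i)$ (resp. $d'(i)$) be the number of arcs on the path from $0$ to $i$ in $\mathcal T$ (resp. $\mathcal T'$). $\mathcal T\succeq_{dif}\mathcal T'$ if there is a permutation $\pi$ of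 $\mathcal I$ with $d(i)\le d'(\pi(i))$ for all $i$. $\mathcal T\succeq_{FO}\mathcal T'$ if there is a permutation $\pi$ such that for every $i$ the binary experiment "signal $x_i$ about the event $G$ vs. $\Omega\setminus G$" under $\mathbb P_{\mathcal T}$ is Blackwell (weakly) more informative than the experiment "signal $x_{\pi(i)}$ about $G$ vs. $\Omega\setminus G$" under $\mathbb P_{\mathcal T'}$. $\mathcal T\succeq_{SO}\mathcal T'$ is defined in the same way with the event $Y^*$ in place of $G$. *)

theory Defs
  imports Complex_Main
begin

text \<open>Agents are 1..I; vertex 0 is the planner (root).
  An information tree (F,s) is represented by its orientation away from the root 0:
  a parent map par, where par i is the tail of the unique arc entering agent i
  (par i = 0 iff i is the seed of its tree).\<close>

definition info_tree :: "nat \<Rightarrow> (nat \<Rightarrow> nat) \<Rightarrow> bool" where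
  "info_tree I par \<longleftrightarrow> (\<forall>i\<in>{1..I}. par i \<in> {0..I} \<and> (\<exists>k. (par ^^ k) i = 0))"

definition depth :: "(nat \<Rightarrow> nat) \<Rightarrow> nat \<Rightarrow> nat" where
  "depth par i = (LEAST k. (par ^^ k) i = 0)"

text \<open>Outcomes: (theta, x) with theta = True meaning g, x i = True meaning y.
  Omega = {g,b} x {y,n}^I, signals extended by False outside 1..I.\<close>
type_synonym outcome = "bool \<times> (nat \<Rightarrow> bool)"

definition Omega :: "nat \<Rightarrow> outcome set" where
  "Omega I = {(th, x). \<forall>i. i \<notin> {1..I} \<longrightarrow> \<not> x i}"

text \<open>Probability of an outcome under the diffusion model: if theta = b nobody gets a
  message; if theta = g, agent i gets a message with prob. 1-eps iff her sender
  (planner or parent) holds a message, independently across arcs.\<close>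
definition weight :: "nat \<Rightarrow> real \<Rightarrow> real \<Rightarrow> (nat \<Rightarrow> nat) \<Rightarrow> outcome \<Rightarrow> real" where
  "weight I rho eps par \<omega> =
     (if fst \<omega> then
        rho * (\<Prod>i\<in>{1..I}.
          (if par i = 0 \<or> snd \<omega> (par i)
           then (if snd \<omega> i then 1 - eps else eps)
           else (if snd \<omega> i then 0 else 1)))
      else
        (1 - rho) * (if (\<forall>i\<in>{1..I}. \<not> snd \<omega> i) then 1 else 0))"

definition prob :: "nat \<Rightarrow> real \<Rightarrow> real \<Rightarrow> (nat \<Rightarrow> nat) \<Rightarrow> outcome set \<Rightarrow> real" where
  "prob I rho eps par A = (\<Sum>\<omega>\<in>Omega I \<inter> A. weight I rho eps par \<omega>)"

definition cond_prob :: "nat \<Rightarrow> real \<Rightarrow> real \<Rightarrow> (nat \<Rightarrow> nat) \<Rightarrow> outcome set \<Rightarrow> outcome set \<Rightarrow> real" where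
  "cond_prob I rho eps par A B = prob I rho eps par (A \<inter> B) / prob I rho eps par B"

definition evG :: "outcome set" where
  "evG = {\<omega>. fst \<omega>}"

definition evYstar :: "nat \<Rightarrow> outcome set" where
  "evYstar I = {\<omega>. \<forall>i\<in>{1..I}. snd \<omega> i}"

text \<open>Binary experiment (signal x_i about E vs. Omega - E): state s (True = E,
  False = complement) and signal value v give Pr(x_i = v given state).\<close>
definition info_exp :: "nat \<Rightarrow> real \<Rightarrow> real \<Rightarrow> (nat \<Rightarrow> nat) \<Rightarrow> outcome set \<Rightarrow> nat \<Rightarrow> bool \<Rightarrow> bool \<Rightarrow> real" where
  "info_exp I rho eps par E i s v =
     cond_prob I rho eps par {\<omega>. snd \<omega> i = v} (if s then E else Omega I - E)"

definition blackwell_geq :: "(bool \<Rightarrow> bool \<Rightarrow> real) \<Rightarrow> (bool \<Rightarrow> bool \<Rightarrow> real) \<Rightarrow> bool" where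
  "blackwell_geq P Q \<longleftrightarrow>
     (\<exists>M :: bool \<Rightarrow> bool \<Rightarrow> real.
        (\<forall>v w. 0 \<le> M v w) \<and> (\<forall>v. M v True + M v False = 1) \<and>
        (\<forall>s w. Q s w = P s True * M True w + P s False * M False w))"

definition dif_geq :: "nat \<Rightarrow> (nat \<Rightarrow> nat) \<Rightarrow> (nat \<Rightarrow> nat) \<Rightarrow> bool" where
  "dif_geq I par par' \<longleftrightarrow>
     (\<exists>\<pi>. bij_betw \<pi> {1..I} {1..I} \<and> (\<forall>i\<in>{1..I}. depth par i \<le> depth par' (\<pi> i)))"

definition FO_geq :: "nat \<Rightarrow> real \<Rightarrow> real \<Rightarrow> (nat \<Rightarrow> nat) \<Rightarrow> (nat \<Rightarrow> nat) \<Rightarrow> bool" where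
  "FO_geq I rho eps par par' \<longleftrightarrow>
     (\<exists>\<pi>. bij_betw \<pi> {1..I} {1..I} \<and>
        (\<forall>i\<in>{1..I}. blackwell_geq (info_exp I rho eps par evG i)
                                   (info_exp I rho eps par' evG (\<pi> i))))"

definition SO_geq :: "nat \<Rightarrow> real \<Rightarrow> real \<Rightarrow> (nat \<Rightarrow> nat) \<Rightarrow> (nat \<Rightarrow> nat) \<Rightarrow> bool" where
  "SO_geq I rho eps par par' \<longleftrightarrow>
     (\<exists>\<pi>. bij_betw \<pi> {1..I} {1..I} \<and>
        (\<forall>i\<in>{1..I}. blackwell_geq (info_exp I rho eps par (evYstar I) i)
                                   (info_exp I rho eps par' (evYstar I) (\<pi> i))))"

end

theory Submission
  imports Defs
begin


lemma finite_ext_set: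
  assumes "finite U"
  shows "finite {x::nat\<Rightarrow>bool. \<forall>j. j \<notin> U \<longrightarrow> x j = g j}"
proof -
  let ?S = "{x::nat\<Rightarrow>bool. \<forall>j. j \<notin> U \<longrightarrow> x j = g j}"
  have inj: "inj_on (\<lambda>x. {j\<in>U. x j}) ?S"
  proof (rule inj_onI)
    fix x y assume "x \<in> ?S" "y \<in> ?S" "{j\<in>U. x j} = {j\<in>U. y j}"
    then show "x = y" by (auto simp: fun_eq_iff set_eq_iff)
  qed
  have "(\<lambda>x. {j\<in>U. x j}) ` ?S \<subseteq> Pow U" by auto
  then have "finite ((\<lambda>x. {j\<in>U. x j}) ` ?S)" using assms finite_subset by blast
  then show ?thesis using finite_imageD inj by blast
qed

lemma sum_kernel:
  fixes F :: "nat \<Rightarrow> (nat \<Rightarrow> bool) \<Rightarrow> real" and T :: "nat \<Rightarrow> nat"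
  assumes "finite U" "\<forall>i\<in>U. \<exists>k. (T^^k) i \<notin> U"
   "\<forall>i\<in>U. \<forall>x y. x i = y i \<longrightarrow> x (T i) = y (T i) \<longrightarrow> F i x = F i y"
   "\<forall>i\<in>U. \<forall>x. F i (x(i:=True)) + F i (x(i:=False)) = 1"
  shows "(\<Sum>x\<in>{x. \<forall>j. j\<notin>U \<longrightarrow> x j = g j}. \<Prod>i\<in>U. F i x) = 1"
  using assms
proof (induction "card U" arbitrary: U g rule: less_induct)
  case less
  show ?case
  proof (cases "U = {}")
    case True
    then have "{x. \<forall>j. j\<notin>U \<longrightarrow> x j = g j} = {g}" by (auto simp: fun_eq_iff)
    then show ?thesis using True by simp
  next
    case False
    then obtain i where i: "i \<in> U" by blast
    then obtain k0 where "(T^^k0) i \<notin> U" using less.prems by blast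
    define k where "k = (LEAST k. (T^^k) i \<notin> U)"
    have k1: "(T^^k) i \<notin> U" unfolding k_def by (rule LeastI) fact
    have k0: "k \<noteq> 0" using k1 i by (cases k) auto
    define l where "l = (T^^(k-1)) i"
    have "k - 1 < k" using k0 by simp
    then have "\<not> (T^^(k-1)) i \<notin> U" unfolding k_def by (rule not_less_Least)
    then have lU: "l \<in> U" unfolding l_def by simp
    have Tl: "T l \<notin> U" using k1 k0 unfolding l_def
      by (metis Suc_pred' bot_nat_0.not_eq_extremum comp_apply funpow.simps(2))
    have Tll: "T l \<noteq> l" using Tl lU by auto
    define S where "S = {x. \<forall>j. j\<notin>U \<longrightarrow> x j = g j}"
    define Sb where "Sb b = {x. \<forall>j. j\<notin>U-{l} \<longrightarrow> x j = (g(l:=b)) j}" for b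
    have fin: "finite (Sb b)" for b unfolding Sb_def
      using finite_ext_set[of "U-{l}" "g(l:=b)"] less.prems(1) by simp
    have Su: "S = Sb True \<union> Sb False"
    proof
      show "S \<subseteq> Sb True \<union> Sb False"
      proof
        fix x assume "x \<in> S"
        then have "x \<in> Sb (x l)" unfolding S_def Sb_def by auto
        then show "x \<in> Sb True \<union> Sb False" by (cases "x l") auto
      qed
      show "Sb True \<union> Sb False \<subseteq> S" unfolding S_def Sb_def using lU by auto
    qed
    have disj: "Sb True \<inter> Sb False = {}" unfolding Sb_def by auto
    have card_lt: "card (U - {l}) < card U" using lU less.prems(1)
      by (meson card_Diff1_less)
    have IH: "(\<Sum>x\<in>Sb b. \<Prod>i\<in>U-{l}. F i x) = 1" for b
      unfolding Sb_def
    proof (rule less.hyps[OF card_lt])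
      show "finite (U - {l})" using less.prems(1) by simp
      show "\<forall>i\<in>U - {l}. \<exists>k. (T ^^ k) i \<notin> U - {l}" using less.prems(2) by blast
      show "\<forall>i\<in>U - {l}. \<forall>x y. x i = y i \<longrightarrow> x (T i) = y (T i) \<longrightarrow> F i x = F i y"
      proof (intro ballI allI impI)
        fix i and x y :: "nat \<Rightarrow> bool" assume "i \<in> U - {l}" "x i = y i" "x (T i) = y (T i)"
        then show "F i x = F i y" using less.prems(3)[rule_format, of i x y] by blast
      qed
      show "\<forall>i\<in>U - {l}. \<forall>x. F i (x(i := True)) + F i (x(i := False)) = 1"
        using less.prems(4) by simp
    qed
    have part: "(\<Sum>x\<in>Sb b. \<Prod>i\<in>U. F i x) = F l (g(l:=b))" for b
    proof -
      have "(\<Sum>x\<in>Sb b. \<Prod>i\<in>U. F i x) = (\<Sum>x\<in>Sb b. F l (g(l:=b)) * (\<Prod>i\<in>U-{l}. F i x))"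
      proof (rule sum.cong[OF refl])
        fix x assume x: "x \<in> Sb b"
        have x1: "x l = (g(l:=b)) l" using x unfolding Sb_def by auto
        have x2: "x (T l) = (g(l:=b)) (T l)" using x Tl Tll unfolding Sb_def by auto
        have "F l x = F l (g(l:=b))"
          by (rule less.prems(3)[rule_format, OF lU x1 x2])
        then show "(\<Prod>i\<in>U. F i x) = F l (g(l:=b)) * (\<Prod>i\<in>U-{l}. F i x)"
          using prod.remove[OF less.prems(1) lU, where g="\<lambda>i. F i x"] by simp
      qed
      also have "\<dots> = F l (g(l:=b))" using IH by (simp add: sum_distrib_left[symmetric])
      finally show ?thesis .
    qed
    have "(\<Sum>x\<in>S. \<Prod>i\<in>U. F i x) = (\<Sum>x\<in>Sb True. \<Prod>i\<in>U. F i x) + (\<Sum>x\<in>Sb False. \<Prod>i\<in>U. F i x)"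
      unfolding Su by (rule sum.union_disjoint[OF fin fin disj])
    also have "\<dots> = 1" unfolding part using less.prems(4) lU by blast
    finally show ?thesis unfolding S_def .
  qed
qed




definition X0 :: "nat \<Rightarrow> (nat\<Rightarrow>bool) set" where
  "X0 I = {x. \<forall>j. j \<notin> {1..I} \<longrightarrow> \<not> x j}"

definition Fk :: "real \<Rightarrow> (nat\<Rightarrow>nat) \<Rightarrow> nat \<Rightarrow> (nat\<Rightarrow>bool) \<Rightarrow> real" where
  "Fk eps T i x = (if T i = 0 \<or> x (T i) then (if x i then 1-eps else eps) else (if x i then 0 else 1))"

definition SG :: "nat \<Rightarrow> real \<Rightarrow> (nat\<Rightarrow>nat) \<Rightarrow> ((nat\<Rightarrow>bool) \<Rightarrow> bool) \<Rightarrow> real" where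
  "SG I eps T P = (\<Sum>x\<in>{x\<in>X0 I. P x}. \<Prod>j\<in>{1..I}. Fk eps T j x)"

lemma finite_X0: "finite (X0 I)"
proof -
  have "X0 I = {x. \<forall>j. j \<notin> {1..I} \<longrightarrow> x j = (\<lambda>_. False) j}" unfolding X0_def by simp
  then show ?thesis using finite_ext_set[of "{1..I}" "\<lambda>_. False"] by simp
qed

lemma tree_T: "info_tree I T \<Longrightarrow> i \<in> {1..I} \<Longrightarrow> T i \<in> {0..I}"
  unfolding info_tree_def by blast

lemma tree_reach: "info_tree I T \<Longrightarrow> i \<in> {1..I} \<Longrightarrow> \<exists>k. (T^^k) i = 0"
  unfolding info_tree_def by blast

lemma funpow_fix: "T i = i \<Longrightarrow> (T^^k) i = i"
  by (induction k) auto

lemma T_neq: assumes "info_tree I T" "i \<in> {1..I}" shows "T i \<noteq> i"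
proof
  assume h: "T i = i"
  obtain k where "(T^^k) i = 0" using tree_reach[OF assms] by blast
  then show False using funpow_fix[of T i k, OF h] assms(2) by simp
qed

lemma depth_0: "info_tree I T \<Longrightarrow> i \<in> {1..I} \<Longrightarrow> (T^^depth T i) i = 0"
  unfolding depth_def using tree_reach by (metis (mono_tags, lifting) LeastI)

lemma depth_ne: "info_tree I T \<Longrightarrow> i \<in> {1..I} \<Longrightarrow> m < depth T i \<Longrightarrow> (T^^m) i \<noteq> 0"
  unfolding depth_def using not_less_Least by blast

lemma depth_in: "info_tree I T \<Longrightarrow> i \<in> {1..I} \<Longrightarrow> m < depth T i \<Longrightarrow> (T^^m) i \<in> {1..I}"
proof (induction m)
  case 0 then show ?case by simp
next
  case (Suc m)
  then have "(T^^m) i \<in> {1..I}" by simp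
  then have "T ((T^^m) i) \<in> {0..I}" using tree_T Suc.prems by blast
  moreover have "(T^^Suc m) i \<noteq> 0" using depth_ne Suc.prems by blast
  ultimately show ?case by auto
qed

lemma depth_pos: "info_tree I T \<Longrightarrow> i \<in> {1..I} \<Longrightarrow> 0 < depth T i"
  using depth_0 by (metis atLeastAtMost_iff funpow_0 gr0I not_one_le_zero)

lemma anc_inj: assumes "info_tree I T" "i \<in> {1..I}"
  shows "inj_on (\<lambda>k. (T^^k) i) {..<depth T i}"
proof (rule ccontr)
  assume "\<not> ?thesis"
  then obtain a b where ab: "a < b" "b < depth T i" "(T^^a) i = (T^^b) i"
    unfolding inj_on_def by (metis lessThan_iff linorder_neqE_nat)
  have per: "\<exists>c\<in>{a..<b}. (T^^(a+m)) i = (T^^c) i" for m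
  proof (induction m)
    case 0 show ?case using ab by (intro bexI[where x=a]) auto
  next
    case (Suc m)
    then obtain c where c: "c \<in> {a..<b}" "(T^^(a+m)) i = (T^^c) i" by blast
    have e: "(T^^(a+Suc m)) i = (T^^(Suc c)) i" using c by simp
    show ?case
    proof (cases "Suc c < b")
      case True then show ?thesis using e c by (intro bexI[where x="Suc c"]) auto
    next
      case False then have "Suc c = b" using c by simp
      then show ?thesis using e ab by (intro bexI[where x=a]) auto
    qed
  qed
  obtain c where c: "c \<in> {a..<b}" "(T^^(a + (depth T i - a))) i = (T^^c) i" using per by blast
  have "(T^^c) i = 0" using c(2) ab depth_0[OF assms] by simp
  moreover have "(T^^c) i \<noteq> 0" using depth_ne[OF assms] c(1) ab by simp
  ultimately show False by simp
qed




lemma Fk_cong: "x i = y i \<Longrightarrow> x (T i) = y (T i) \<Longrightarrow> Fk eps T i x = Fk eps T i y"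
  unfolding Fk_def by simp

lemma Fk_kernel: "T i \<noteq> i \<Longrightarrow> Fk eps T i (x(i:=True)) + Fk eps T i (x(i:=False)) = 1"
  unfolding Fk_def by simp

lemma SG_kernel_sum:
  assumes "info_tree I T" "U \<subseteq> {1..I}"
  shows "(\<Sum>x\<in>{x. \<forall>j. j\<notin>U \<longrightarrow> x j = g j}. \<Prod>i\<in>U. Fk eps T i x) = 1"
proof (rule sum_kernel)
  show "finite U" using assms(2) finite_subset by blast
  show "\<forall>i\<in>U. \<exists>k. (T ^^ k) i \<notin> U"
  proof
    fix i assume "i \<in> U"
    then obtain k where "(T^^k) i = 0" using tree_reach[OF assms(1)] assms(2) by blast
    moreover have "0 \<notin> U" using assms(2) by auto
    ultimately show "\<exists>k. (T ^^ k) i \<notin> U" by metis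
  qed
  show "\<forall>i\<in>U. \<forall>x y. x i = y i \<longrightarrow> x (T i) = y (T i) \<longrightarrow> Fk eps T i x = Fk eps T i y"
    by (intro ballI allI impI) (rule Fk_cong; assumption)
  show "\<forall>i\<in>U. \<forall>x. Fk eps T i (x(i := True)) + Fk eps T i (x(i := False)) = 1"
    using Fk_kernel T_neq[OF assms(1)] assms(2) by blast
qed

lemma SG_anc:
  assumes "info_tree I T" "A \<subseteq> {1..I}" "\<forall>j\<in>A. T j = 0 \<or> T j \<in> A"
  shows "SG I eps T (\<lambda>x. \<forall>j\<in>A. x j) = (1-eps)^card A"
proof -
  define U where "U = {1..I} - A"
  define g where "g j = (j \<in> A)" for j
  have set: "{x\<in>X0 I. \<forall>j\<in>A. x j} = {x. \<forall>j. j\<notin>U \<longrightarrow> x j = g j}"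
    using assms(2) unfolding X0_def U_def g_def by auto
  have fin: "finite {1..I}" by simp
  have pr: "(\<Prod>j\<in>{1..I}. Fk eps T j x) = (1-eps)^card A * (\<Prod>j\<in>U. Fk eps T j x)"
    if x: "x \<in> {x\<in>X0 I. \<forall>j\<in>A. x j}" for x
  proof -
    have "(\<Prod>j\<in>{1..I}. Fk eps T j x) = (\<Prod>j\<in>U. Fk eps T j x) * (\<Prod>j\<in>A. Fk eps T j x)"
      unfolding U_def by (rule prod.subset_diff[OF assms(2) fin])
    moreover have "(\<Prod>j\<in>A. Fk eps T j x) = (\<Prod>j\<in>A. 1-eps)"
    proof (rule prod.cong[OF refl])
      fix j assume j: "j \<in> A"
      then have "x j" using x by blast
      moreover have "T j = 0 \<or> x (T j)" using assms(3) j x by blast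
      ultimately show "Fk eps T j x = 1 - eps" unfolding Fk_def by auto
    qed
    ultimately show ?thesis by simp
  qed
  have "SG I eps T (\<lambda>x. \<forall>j\<in>A. x j) = (\<Sum>x\<in>{x\<in>X0 I. \<forall>j\<in>A. x j}. (1-eps)^card A * (\<Prod>j\<in>U. Fk eps T j x))"
    unfolding SG_def by (rule sum.cong[OF refl]) (rule pr)
  also have "\<dots> = (1-eps)^card A * (\<Sum>x\<in>{x. \<forall>j. j\<notin>U \<longrightarrow> x j = g j}. \<Prod>j\<in>U. Fk eps T j x)"
    unfolding set by (simp add: sum_distrib_left)
  also have "\<dots> = (1-eps)^card A"
    using SG_kernel_sum[OF assms(1), where U=U and g=g and eps=eps] unfolding U_def by simp
  finally show ?thesis .
qed

lemma SG_all: "info_tree I T \<Longrightarrow> SG I eps T (\<lambda>x. True) = 1"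
  using SG_anc[of I T "{}" eps] by simp

lemma SG_cong: "(\<And>x. x \<in> X0 I \<Longrightarrow> P x = Q x) \<Longrightarrow> SG I eps T P = SG I eps T Q"
  unfolding SG_def by (rule sum.cong) auto

lemma SG_split: "SG I eps T P = SG I eps T (\<lambda>x. P x \<and> Q x) + SG I eps T (\<lambda>x. P x \<and> \<not> Q x)"
proof -
  have e: "{x\<in>X0 I. P x} = {x\<in>X0 I. P x \<and> Q x} \<union> {x\<in>X0 I. P x \<and> \<not> Q x}" by auto
  show ?thesis unfolding SG_def e
    by (rule sum.union_disjoint) (use finite_X0 in auto)
qed

lemma SG_xi:
  assumes T: "info_tree I T" and i: "i \<in> {1..I}"
  shows "SG I eps T (\<lambda>x. x i) = (1-eps)^depth T i"
proof -
  define d where "d = depth T i"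
  define A where "A = (\<lambda>k. (T^^k) i) ` {..<d}"
  have Asub: "A \<subseteq> {1..I}" unfolding A_def d_def using depth_in[OF T i] by blast
  have Acl: "\<forall>j\<in>A. T j = 0 \<or> T j \<in> A"
  proof
    fix j assume "j \<in> A"
    then obtain k where k: "k < d" "j = (T^^k) i" unfolding A_def by blast
    have Tj: "T j = (T^^Suc k) i" using k by simp
    show "T j = 0 \<or> T j \<in> A"
    proof (cases "Suc k < d")
      case True then show ?thesis using Tj unfolding A_def by blast
    next
      case False then have "Suc k = d" using k by simp
      then show ?thesis using Tj depth_0[OF T i] unfolding d_def by simp
    qed
  qed
  have cardA: "card A = d" unfolding A_def d_def
    using card_image[OF anc_inj[OF T i]] by simp
  have d0: "0 < d" unfolding d_def using depth_pos[OF T i] .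
  have iA: "i \<in> A" unfolding A_def using d0 by (intro image_eqI[where x=0]) auto
  have "SG I eps T (\<lambda>x. x i) = SG I eps T (\<lambda>x. \<forall>j\<in>A. x j)"
    unfolding SG_def
  proof (rule sum.mono_neutral_right)
    show "finite {x \<in> X0 I. x i}" using finite_X0 by simp
    show "{x \<in> X0 I. \<forall>j\<in>A. x j} \<subseteq> {x \<in> X0 I. x i}" using iA by auto
    show "\<forall>x\<in>{x \<in> X0 I. x i} - {x \<in> X0 I. \<forall>j\<in>A. x j}. (\<Prod>j = 1..I. Fk eps T j x) = 0"
    proof
      fix x assume x: "x \<in> {x \<in> X0 I. x i} - {x \<in> X0 I. \<forall>j\<in>A. x j}"
      show "(\<Prod>j = 1..I. Fk eps T j x) = 0"
      proof (rule ccontr)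
        assume "(\<Prod>j = 1..I. Fk eps T j x) \<noteq> 0"
        then have nz: "\<forall>j\<in>{1..I}. Fk eps T j x \<noteq> 0" by simp
        have "x ((T^^k) i)" if "k < d" for k
          using that
        proof (induction k)
          case 0 then show ?case using x by simp
        next
          case (Suc k)
          then have xk: "x ((T^^k) i)" by simp
          have jI: "(T^^k) i \<in> {1..I}" using depth_in[OF T i] Suc.prems unfolding d_def by simp
          have "T ((T^^k) i) \<noteq> 0" using depth_ne[OF T i, of "Suc k"] Suc.prems unfolding d_def by simp
          moreover have "Fk eps T ((T^^k) i) x \<noteq> 0" using nz jI by blast
          ultimately have "x (T ((T^^k) i))" using xk unfolding Fk_def by (auto split: if_splits)
          then show ?case by simp
        qed
        then have "\<forall>j\<in>A. x j" unfolding A_def by blast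
        then show False using x by blast
      qed
    qed
  qed
  also have "\<dots> = (1-eps)^card A" by (rule SG_anc[OF T Asub Acl])
  finally show ?thesis using cardA d_def by simp
qed




lemma prob_split:
  "prob I rho eps T A = rho * SG I eps T (\<lambda>x. (True,x) \<in> A)
     + (1-rho) * (if (False, (\<lambda>_. False)) \<in> A then 1 else 0)"
proof -
  define S1 where "S1 = {x\<in>X0 I. (True,x) \<in> A}"
  define S2 where "S2 = {x\<in>X0 I. (False,x) \<in> A}"
  have f1: "finite S1" unfolding S1_def using finite_X0 by simp
  have f2: "finite S2" unfolding S2_def using finite_X0 by simp
  have O: "Omega I \<inter> A = Pair True ` S1 \<union> Pair False ` S2"
  proof
    show "Omega I \<inter> A \<subseteq> Pair True ` S1 \<union> Pair False ` S2"
    proof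
      fix w assume w: "w \<in> Omega I \<inter> A"
      obtain th x where wx: "w = (th, x)" by (metis surj_pair)
      show "w \<in> Pair True ` S1 \<union> Pair False ` S2"
        using w unfolding wx S1_def S2_def Omega_def X0_def by (cases th) auto
    qed
    show "Pair True ` S1 \<union> Pair False ` S2 \<subseteq> Omega I \<inter> A"
      unfolding S1_def S2_def Omega_def X0_def by auto
  qed
  have "prob I rho eps T A = (\<Sum>w\<in>Pair True ` S1. weight I rho eps T w) + (\<Sum>w\<in>Pair False ` S2. weight I rho eps T w)"
    unfolding prob_def O by (rule sum.union_disjoint) (use f1 f2 in auto)
  also have "\<dots> = (\<Sum>x\<in>S1. weight I rho eps T (True,x)) + (\<Sum>x\<in>S2. weight I rho eps T (False,x))"
    by (simp add: sum.reindex inj_on_def)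
  also have "(\<Sum>x\<in>S1. weight I rho eps T (True,x)) = rho * SG I eps T (\<lambda>x. (True,x) \<in> A)"
  proof -
    have wT: "weight I rho eps T (True,x) = rho * (\<Prod>j\<in>{1..I}. Fk eps T j x)" for x
      unfolding weight_def Fk_def snd_conv fst_conv by simp
    show ?thesis unfolding SG_def S1_def wT by (simp add: sum_distrib_left)
  qed
  also have "(\<Sum>x\<in>S2. weight I rho eps T (False,x)) = (\<Sum>x\<in>S2. if x = (\<lambda>_. False) then 1-rho else 0)"
  proof (rule sum.cong[OF refl])
    fix x assume "x \<in> S2"
    then have "x \<in> X0 I" unfolding S2_def by simp
    then have "(\<forall>i\<in>{1..I}. \<not> x i) \<longleftrightarrow> x = (\<lambda>_. False)" unfolding X0_def by (auto simp: fun_eq_iff)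
    then show "weight I rho eps T (False,x) = (if x = (\<lambda>_. False) then 1-rho else 0)"
      unfolding weight_def by simp
  qed
  also have "\<dots> = (if (\<lambda>_. False) \<in> S2 then 1 - rho else 0)"
    using f2 by (simp add: sum.delta)
  also have "(if (\<lambda>_. False) \<in> S2 then 1 - rho else 0) = (1-rho) * (if (False, (\<lambda>_. False)) \<in> A then 1 else 0)"
    unfolding S2_def X0_def by simp
  finally show ?thesis .
qed

lemma z_Omega: "(b, (\<lambda>_. False)) \<in> Omega I"
  unfolding Omega_def by simp

lemma X0_Omega: "x \<in> X0 I \<Longrightarrow> (b, x) \<in> Omega I"
  unfolding Omega_def X0_def by simp

lemma SG_empty: "SG I eps T (\<lambda>x. False) = 0"
  unfolding SG_def by simp

lemma SG_not_xi:
  assumes T: "info_tree I T" and i: "i \<in> {1..I}"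
  shows "SG I eps T (\<lambda>x. \<not> x i) = 1 - (1-eps)^depth T i"
  using SG_split[of I eps T "\<lambda>x. True" "\<lambda>x. x i"] SG_all[OF T, of eps] SG_xi[OF T i, of eps] by simp

lemma SG_Y:
  assumes T: "info_tree I T"
  shows "SG I eps T (\<lambda>x. \<forall>j\<in>{1..I}. x j) = (1-eps)^I"
proof -
  have "\<forall>j\<in>{1..I}. T j = 0 \<or> T j \<in> {1..I}" using tree_T[OF T] by fastforce
  then show ?thesis using SG_anc[OF T subset_refl, of eps] by simp
qed

lemma SG_xi_Y:
  assumes T: "info_tree I T" and i: "i \<in> {1..I}"
  shows "SG I eps T (\<lambda>x. x i \<and> (\<forall>j\<in>{1..I}. x j)) = (1-eps)^I"
proof -
  have "SG I eps T (\<lambda>x. x i \<and> (\<forall>j\<in>{1..I}. x j)) = SG I eps T (\<lambda>x. \<forall>j\<in>{1..I}. x j)"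
    by (rule SG_cong) (use i in blast)
  then show ?thesis using SG_Y[OF T] by simp
qed

context
  fixes I :: nat and rho eps :: real and T :: "nat \<Rightarrow> nat" and i :: nat
  assumes T: "info_tree I T" and i: "i \<in> {1..I}"
begin

lemma FG: "prob I rho eps T ({\<omega>. snd \<omega> i = v} \<inter> evG) = rho * (if v then (1-eps)^depth T i else 1 - (1-eps)^depth T i)"
  unfolding prob_split evG_def using SG_xi[OF T i] SG_not_xi[OF T i] by (cases v) simp_all

lemma FnG: "prob I rho eps T ({\<omega>. snd \<omega> i = v} \<inter> (Omega I - evG)) = (1-rho) * (if v then 0 else 1)"
  unfolding prob_split evG_def using SG_empty[of I eps T] z_Omega[of False I] by (cases v) simp_all

lemma FY: "prob I rho eps T ({\<omega>. snd \<omega> i = v} \<inter> evYstar I) = rho * (1-eps)^I * (if v then 1 else 0)"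
proof (cases v)
  case True
  then show ?thesis unfolding prob_split evYstar_def using SG_xi_Y[OF T i, of eps] i by auto
next
  case False
  have "SG I eps T (\<lambda>x. (True, x) \<in> {\<omega>. snd \<omega> i = v} \<inter> evYstar I) = SG I eps T (\<lambda>x. False)"
    by (rule SG_cong) (use False i in \<open>auto simp: evYstar_def\<close>)
  then show ?thesis unfolding prob_split using False SG_empty[of I eps T] i by (auto simp: evYstar_def)
qed

lemma FnY: "prob I rho eps T ({\<omega>. snd \<omega> i = v} \<inter> (Omega I - evYstar I)) =
   (if v then rho * ((1-eps)^depth T i - (1-eps)^I) else 1 - rho * (1-eps)^depth T i)"
proof (cases v)
  case True
  have "SG I eps T (\<lambda>x. (True, x) \<in> {\<omega>. snd \<omega> i = v} \<inter> (Omega I - evYstar I)) =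
        SG I eps T (\<lambda>x. x i \<and> \<not> (\<forall>j\<in>{1..I}. x j))"
    by (rule SG_cong) (use True X0_Omega in \<open>auto simp: evYstar_def\<close>)
  moreover have "SG I eps T (\<lambda>x. x i) = SG I eps T (\<lambda>x. x i \<and> (\<forall>j\<in>{1..I}. x j)) + SG I eps T (\<lambda>x. x i \<and> \<not> (\<forall>j\<in>{1..I}. x j))"
    by (rule SG_split)
  ultimately show ?thesis unfolding prob_split using True SG_xi[OF T i, of eps] SG_xi_Y[OF T i, of eps]
    by simp
next
  case False
  have "prob I rho eps T ({\<omega>. snd \<omega> i = v} \<inter> (Omega I - evYstar I)) =
    rho * SG I eps T (\<lambda>x. (True, x) \<in> {\<omega>. snd \<omega> i = v} \<inter> (Omega I - evYstar I))
    + (1-rho) * (if (False, (\<lambda>_. False)) \<in> {\<omega>. snd \<omega> i = v} \<inter> (Omega I - evYstar I) then 1 else 0)"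
    by (rule prob_split)
  also have "SG I eps T (\<lambda>x. (True, x) \<in> {\<omega>. snd \<omega> i = v} \<inter> (Omega I - evYstar I)) =
        SG I eps T (\<lambda>x. \<not> x i)"
    by (rule SG_cong) (use False X0_Omega i in \<open>auto simp: evYstar_def\<close>)
  also have "SG I eps T (\<lambda>x. \<not> x i) = 1 - (1-eps)^depth T i" by (rule SG_not_xi[OF T i])
  also have "(if (False, (\<lambda>_. False)) \<in> {\<omega>. snd \<omega> i = v} \<inter> (Omega I - evYstar I) then 1 else 0) = (1::real)"
    using False z_Omega i by (auto simp: evYstar_def)
  finally show ?thesis using False by (simp add: algebra_simps)
qed

end

lemma prob_G: "info_tree I T \<Longrightarrow> prob I rho eps T evG = rho"
  unfolding prob_split evG_def using SG_all[of I T eps] by simp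

lemma prob_nG: "info_tree I T \<Longrightarrow> prob I rho eps T (Omega I - evG) = 1 - rho"
  unfolding prob_split evG_def using SG_empty[of I eps T] z_Omega[of False I] by simp

lemma prob_Y: assumes "info_tree I T" "1 \<le> I"
  shows "prob I rho eps T (evYstar I) = rho * (1-eps)^I"
proof -
  have "(False, \<lambda>_. False) \<notin> evYstar I" using assms(2) by (auto simp: evYstar_def)
  then show ?thesis unfolding prob_split using SG_Y[OF assms(1), of eps]
    by (simp add: evYstar_def)
qed

lemma prob_nY: assumes T: "info_tree I T" and I: "1 \<le> I"
  shows "prob I rho eps T (Omega I - evYstar I) = 1 - rho * (1-eps)^I"
proof -
  have "prob I rho eps T (Omega I - evYstar I) = rho * SG I eps T (\<lambda>x. (True, x) \<in> Omega I - evYstar I)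
     + (1-rho) * (if (False, (\<lambda>_. False)) \<in> Omega I - evYstar I then 1 else 0)"
    by (rule prob_split)
  also have "SG I eps T (\<lambda>x. (True, x) \<in> Omega I - evYstar I) = SG I eps T (\<lambda>x. True \<and> \<not> (\<forall>j\<in>{1..I}. x j))"
    by (rule SG_cong) (use X0_Omega in \<open>auto simp: evYstar_def\<close>)
  also have "SG I eps T (\<lambda>x. True \<and> \<not> (\<forall>j\<in>{1..I}. x j)) = 1 - (1-eps)^I"
  proof -
    have "SG I eps T (\<lambda>x. True) = SG I eps T (\<lambda>x. True \<and> (\<forall>j\<in>{1..I}. x j)) + SG I eps T (\<lambda>x. True \<and> \<not> (\<forall>j\<in>{1..I}. x j))"
      by (rule SG_split)
    moreover have "SG I eps T (\<lambda>x. True \<and> (\<forall>j\<in>{1..I}. x j)) = (1-eps)^I"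
      using SG_Y[OF T, of eps] by simp
    ultimately show ?thesis using SG_all[OF T, of eps] by linarith
  qed
  also have "(if (False, (\<lambda>_. False)) \<in> Omega I - evYstar I then 1 else 0) = (1::real)"
    using z_Omega I by (auto simp: evYstar_def)
  finally show ?thesis by (simp add: algebra_simps)
qed




lemma expG:
  assumes T: "info_tree I T" and i: "i \<in> {1..I}" and r: "0 < rho" "rho < 1"
  shows "info_exp I rho eps T evG i = (\<lambda>s v. if s then (if v then (1-eps)^depth T i else 1 - (1-eps)^depth T i) else (if v then 0 else 1))"
proof (intro ext)
  fix s v
  show "info_exp I rho eps T evG i s v = (if s then (if v then (1-eps)^depth T i else 1 - (1-eps)^depth T i) else (if v then 0 else 1))"
  proof (cases s)
    case True
    then show ?thesis unfolding info_exp_def cond_prob_def using FG[OF T i, of rho eps v] prob_G[OF T, of rho eps] r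
      by simp
  next
    case False
    then show ?thesis unfolding info_exp_def cond_prob_def using FnG[OF T i, of rho eps v] prob_nG[OF T, of rho eps] r
      by simp
  qed
qed

lemma expY:
  assumes T: "info_tree I T" and i: "i \<in> {1..I}" and r: "0 < rho" "rho < 1" and e: "0 < eps" "eps < 1"
  shows "info_exp I rho eps T (evYstar I) i = (\<lambda>s v. if s then (if v then 1 else 0) else
     (if v then rho * ((1-eps)^depth T i - (1-eps)^I) / (1 - rho * (1-eps)^I)
      else 1 - rho * ((1-eps)^depth T i - (1-eps)^I) / (1 - rho * (1-eps)^I)))"
proof (intro ext)
  fix s v
  have I1: "1 \<le> I" using i by simp
  have rp: "0 < (1-eps)^I" using e by simp
  have r1: "(1-eps)^I \<le> 1" using e by (simp add: power_le_one)
  have p0: "rho * (1-eps)^I \<noteq> 0" using rp r by (metis less_irrefl mult_pos_pos)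
  have "rho * (1-eps)^I \<le> rho" using r1 r by (simp add: mult_left_le)
  then have "rho * (1-eps)^I < 1" using r by linarith
  then have p1: "1 - rho * (1-eps)^I \<noteq> 0" by simp
  show "info_exp I rho eps T (evYstar I) i s v = (if s then (if v then 1 else 0) else
     (if v then rho * ((1-eps)^depth T i - (1-eps)^I) / (1 - rho * (1-eps)^I)
      else 1 - rho * ((1-eps)^depth T i - (1-eps)^I) / (1 - rho * (1-eps)^I)))"
  proof (cases s)
    case True
    then show ?thesis unfolding info_exp_def cond_prob_def using FY[OF T i, of rho eps v] prob_Y[OF T I1, of rho eps] p0
      by simp
  next
    case False
    have N: "prob I rho eps T ({\<omega>. snd \<omega> i = v} \<inter> (Omega I - evYstar I)) =
      (if v then rho * ((1-eps)^depth T i - (1-eps)^I) else 1 - rho * (1-eps)^depth T i)"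
      by (rule FnY[OF T i])
    have D: "prob I rho eps T (Omega I - evYstar I) = 1 - rho * (1-eps)^I" by (rule prob_nY[OF T I1])
    have "info_exp I rho eps T (evYstar I) i s v = prob I rho eps T ({\<omega>. snd \<omega> i = v} \<inter> (Omega I - evYstar I)) / prob I rho eps T (Omega I - evYstar I)"
      unfolding info_exp_def cond_prob_def using False by simp
    also have "\<dots> = (if v then rho * ((1-eps)^depth T i - (1-eps)^I) else 1 - rho * (1-eps)^depth T i) / (1 - rho * (1-eps)^I)"
      unfolding N D ..
    finally show ?thesis using p1 False by (cases v) (simp_all add: field_simps)
  qed
qed

lemma bw1:
  fixes a b :: real
  assumes "0 < a" "a \<le> 1" "0 \<le> b" "b \<le> 1"
  shows "blackwell_geq (\<lambda>s v. if s then (if v then a else 1-a) else (if v then 0 else 1))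
                       (\<lambda>s v. if s then (if v then b else 1-b) else (if v then 0 else 1)) \<longleftrightarrow> b \<le> a"
proof
  assume "blackwell_geq (\<lambda>s v. if s then (if v then a else 1-a) else (if v then 0 else 1))
                       (\<lambda>s v. if s then (if v then b else 1-b) else (if v then 0 else 1))"
  then obtain M where M: "\<forall>v w. 0 \<le> M v w" "\<forall>v. M v True + M v False = 1"
    "\<forall>s w. (if s then (if w then b else 1-b) else (if w then 0 else 1)) =
       (if s then (if True then a else 1-a) else (if True then 0 else 1)) * M True w +
       (if s then (if False then a else 1-a) else (if False then 0 else 1)) * M False w"
    unfolding blackwell_geq_def by blast
  have "0 = M False True" using M(3)[rule_format, of False True] by simp
  moreover have "b = a * M True True + (1-a) * M False True" using M(3)[rule_format, of True True] by simp
  moreover have "M True True \<le> 1"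
  proof -
    have "M True True + M True False = 1" using M(2) by blast
    moreover have "0 \<le> M True False" using M(1) by blast
    ultimately show ?thesis by linarith
  qed
  ultimately have "b = a * M True True" "a * M True True \<le> a" using assms(1) by (simp_all add: mult_left_le)
  then show "b \<le> a" by simp
next
  assume ba: "b \<le> a"
  show "blackwell_geq (\<lambda>s v. if s then (if v then a else 1-a) else (if v then 0 else 1))
                       (\<lambda>s v. if s then (if v then b else 1-b) else (if v then 0 else 1))"
    unfolding blackwell_geq_def
  proof (intro exI[where x="\<lambda>v w. if v then (if w then b/a else 1 - b/a) else (if w then 0 else 1)"] conjI allI)
    fix v w
    show "0 \<le> (if v then (if w then b/a else 1 - b/a) else (if w then 0 else 1::real))"
      using assms ba by auto
  next
    fix v show "(if v then (if True then b/a else 1 - b/a) else (if True then 0 else 1::real)) +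
       (if v then (if False then b/a else 1 - b/a) else (if False then 0 else 1)) = 1" by simp
  next
    fix s w
    show "(if s then (if w then b else 1-b) else (if w then 0 else 1)) =
      (if s then (if True then a else 1-a) else (if True then 0 else 1)) * (if True then (if w then b/a else 1 - b/a) else (if w then 0 else 1)) +
      (if s then (if False then a else 1-a) else (if False then 0 else 1)) * (if False then (if w then b/a else 1 - b/a) else (if w then 0 else 1))"
      using assms by (cases s; cases w) (simp_all add: field_simps)
  qed
qed

lemma bw2:
  fixes a b :: real
  assumes "a < 1" "b \<le> 1"
  shows "blackwell_geq (\<lambda>s v. if s then (if v then 1 else 0) else (if v then a else 1-a))
                       (\<lambda>s v. if s then (if v then 1 else 0) else (if v then b else 1-b)) \<longleftrightarrow> a \<le> b"
proof
  assume "blackwell_geq (\<lambda>s v. if s then (if v then 1 else 0) else (if v then a else 1-a))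
                       (\<lambda>s v. if s then (if v then 1 else 0) else (if v then b else 1-b))"
  then obtain M where M: "\<forall>v w. 0 \<le> M v w" "\<forall>v. M v True + M v False = 1"
    "\<forall>s w. (if s then (if w then 1 else 0) else (if w then b else 1-b)) =
       (if s then (if True then 1 else 0) else (if True then a else 1-a)) * M True w +
       (if s then (if False then 1 else 0) else (if False then a else 1-a)) * M False w"
    unfolding blackwell_geq_def by blast
  have "1 = M True True" using M(3)[rule_format, of True True] by simp
  moreover have "b = a * M True True + (1-a) * M False True" using M(3)[rule_format, of False True] by simp
  moreover have "0 \<le> (1-a) * M False True" using M(1) assms(1) by simp
  ultimately show "a \<le> b" by simp
next
  assume ab: "a \<le> b"
  show "blackwell_geq (\<lambda>s v. if s then (if v then 1 else 0) else (if v then a else 1-a))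
                       (\<lambda>s v. if s then (if v then 1 else 0) else (if v then b else 1-b))"
    unfolding blackwell_geq_def
  proof (intro exI[where x="\<lambda>v w. if v then (if w then 1 else 0) else (if w then (b-a)/(1-a) else (1-b)/(1-a))"] conjI allI)
    fix v w
    show "0 \<le> (if v then (if w then 1 else 0) else (if w then (b-a)/(1-a) else (1-b)/(1-a)::real))"
      using assms ab by auto
  next
    fix v show "(if v then (if True then 1 else 0) else (if True then (b-a)/(1-a) else (1-b)/(1-a)::real)) +
       (if v then (if False then 1 else 0) else (if False then (b-a)/(1-a) else (1-b)/(1-a))) = 1"
      using assms by (simp add: field_simps)
  next
    fix s w
    show "(if s then (if w then 1 else 0) else (if w then b else 1-b)) =
      (if s then (if True then 1 else 0) else (if True then a else 1-a)) * (if True then (if w then 1 else 0) else (if w then (b-a)/(1-a) else (1-b)/(1-a))) +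
      (if s then (if False then 1 else 0) else (if False then a else 1-a)) * (if False then (if w then 1 else 0) else (if w then (b-a)/(1-a) else (1-b)/(1-a)))"
      using assms by (cases s; cases w) (simp_all add: field_simps)
  qed
qed

lemma inv_perm:
  "(\<exists>\<pi>. bij_betw \<pi> S S \<and> (\<forall>i\<in>S. R i (\<pi> i))) \<longleftrightarrow> (\<exists>\<sigma>. bij_betw \<sigma> S S \<and> (\<forall>i\<in>S. R (\<sigma> i) i))"
proof
  assume "\<exists>\<pi>. bij_betw \<pi> S S \<and> (\<forall>i\<in>S. R i (\<pi> i))"
  then obtain \<pi> where p: "bij_betw \<pi> S S" "\<forall>i\<in>S. R i (\<pi> i)" by blast
  have b: "bij_betw (inv_into S \<pi>) S S" using bij_betw_inv_into[OF p(1)] .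
  have "\<forall>i\<in>S. R (inv_into S \<pi> i) i"
  proof
    fix i assume i: "i \<in> S"
    have "inv_into S \<pi> i \<in> S" using b i bij_betw_apply by fastforce
    then have "R (inv_into S \<pi> i) (\<pi> (inv_into S \<pi> i))" using p(2) by blast
    then show "R (inv_into S \<pi> i) i" using bij_betw_inv_into_right[OF p(1) i] by simp
  qed
  then show "\<exists>\<sigma>. bij_betw \<sigma> S S \<and> (\<forall>i\<in>S. R (\<sigma> i) i)" using b by blast
next
  assume "\<exists>\<sigma>. bij_betw \<sigma> S S \<and> (\<forall>i\<in>S. R (\<sigma> i) i)"
  then obtain \<pi> where p: "bij_betw \<pi> S S" "\<forall>i\<in>S. R (\<pi> i) i" by blast
  have b: "bij_betw (inv_into S \<pi>) S S" using bij_betw_inv_into[OF p(1)] .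
  have "\<forall>i\<in>S. R i (inv_into S \<pi> i)"
  proof
    fix i assume i: "i \<in> S"
    have "inv_into S \<pi> i \<in> S" using b i bij_betw_apply by fastforce
    then have "R (\<pi> (inv_into S \<pi> i)) (inv_into S \<pi> i)" using p(2) by blast
    then show "R i (inv_into S \<pi> i)" using bij_betw_inv_into_right[OF p(1) i] by simp
  qed
  then show "\<exists>\<sigma>. bij_betw \<sigma> S S \<and> (\<forall>i\<in>S. R i (\<sigma> i))" using b by blast
qed




lemma divle: "(0::real) < D \<Longrightarrow> (x/D \<le> y/D) \<longleftrightarrow> x \<le> y"
  by (simp add: divide_le_cancel)

lemma perm_cong:
  assumes "\<And>i j. i \<in> S \<Longrightarrow> j \<in> S \<Longrightarrow> P i j \<longleftrightarrow> Q i j"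
  shows "(\<exists>\<pi>. bij_betw \<pi> S S \<and> (\<forall>i\<in>S. P i (\<pi> i))) \<longleftrightarrow> (\<exists>\<pi>. bij_betw \<pi> S S \<and> (\<forall>i\<in>S. Q i (\<pi> i)))"
proof -
  have "bij_betw \<pi> S S \<Longrightarrow> (\<forall>i\<in>S. P i (\<pi> i)) \<longleftrightarrow> (\<forall>i\<in>S. Q i (\<pi> i))" for \<pi>
    using assms bij_betw_apply by metis
  then show ?thesis by blast
qed

theorem proposition4:
  fixes I :: nat and rho eps :: real and T T' :: "nat \<Rightarrow> nat"
  assumes "I \<ge> 2" and "0 < rho" and "rho < 1" and "0 < eps" and "eps < 1"
    and "info_tree I T" and "info_tree I T'"
  shows "(dif_geq I T T' \<longleftrightarrow> FO_geq I rho eps T T') \<and>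
         (FO_geq I rho eps T T' \<longleftrightarrow> SO_geq I rho eps T' T)"
proof -
  note T = assms(6) and T' = assms(7)
  have r: "0 < rho" "rho < 1" using assms by auto
  have e: "0 < eps" "eps < 1" using assms by auto
  have qpos: "0 < (1-eps)^n" for n using e by simp
  have qle: "(1-eps)^n \<le> 1" for n using e by (simp add: power_le_one)
  have qmono: "(1-eps)^m \<le> (1-eps)^n \<longleftrightarrow> n \<le> m" for m n using e by simp
  define D where "D = 1 - rho * (1-eps)^I"
  have "rho * (1-eps)^I \<le> rho" using qle[of I] r by (simp add: mult_left_le)
  then have Dpos: "0 < D" unfolding D_def using r by linarith
  have FOi: "blackwell_geq (info_exp I rho eps T evG i) (info_exp I rho eps T' evG j) \<longleftrightarrow> depth T i \<le> depth T' j"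
    if i: "i \<in> {1..I}" and j: "j \<in> {1..I}" for i j
    unfolding expG[OF T i r] expG[OF T' j r]
    using bw1[OF qpos qle less_imp_le[OF qpos] qle] qmono by simp
  have aless: "rho * ((1-eps)^n - (1-eps)^I) / D < 1" for n
  proof -
    have "rho * (1-eps)^n \<le> rho" using qle[of n] r by (simp add: mult_left_le)
    then have "rho * (1-eps)^n < 1" using r by linarith
    then have "rho * ((1-eps)^n - (1-eps)^I) < D" unfolding D_def by (simp add: algebra_simps)
    then show ?thesis using Dpos by simp
  qed
  have SOi: "blackwell_geq (info_exp I rho eps T' (evYstar I) i) (info_exp I rho eps T (evYstar I) j) \<longleftrightarrow> depth T j \<le> depth T' i"
    if i: "i \<in> {1..I}" and j: "j \<in> {1..I}" for i j
  proof -
    have "blackwell_geq (info_exp I rho eps T' (evYstar I) i) (info_exp I rho eps T (evYstar I) j) \<longleftrightarrow>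
      rho * ((1-eps)^depth T' i - (1-eps)^I) / D \<le> rho * ((1-eps)^depth T j - (1-eps)^I) / D"
      unfolding expY[OF T' i r e] expY[OF T j r e] D_def[symmetric]
      using bw2[OF aless less_imp_le[OF aless]] by simp
    also have "\<dots> \<longleftrightarrow> (1-eps)^depth T' i \<le> (1-eps)^depth T j"
      using divle[OF Dpos] r by simp
    also have "\<dots> \<longleftrightarrow> depth T j \<le> depth T' i" by (rule qmono)
    finally show ?thesis .
  qed
  have A: "FO_geq I rho eps T T' \<longleftrightarrow> dif_geq I T T'"
    unfolding FO_geq_def dif_geq_def by (rule perm_cong) (rule FOi)
  have B: "SO_geq I rho eps T' T \<longleftrightarrow> (\<exists>\<sigma>. bij_betw \<sigma> {1..I} {1..I} \<and> (\<forall>i\<in>{1..I}. depth T (\<sigma> i) \<le> depth T' i))"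
    unfolding SO_geq_def by (rule perm_cong) (rule SOi)
  have C: "dif_geq I T T' \<longleftrightarrow> (\<exists>\<sigma>. bij_betw \<sigma> {1..I} {1..I} \<and> (\<forall>i\<in>{1..I}. depth T (\<sigma> i) \<le> depth T' i))"
    unfolding dif_geq_def by (rule inv_perm)
  show ?thesis using A B C by blast
qed


end
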